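(* For $n\ge1$ and $0\le k\le n-1$, let $a_{n,k}$ be the number of $\pi\in\mathfrak{A}_{2n}(231)$ with $\pi(2n)=n+k+1$. Then $$a_{n,k}=\frac{n-k}{n}\binom{n-1+k}{k}.$$
   Context: $\mathfrak{A}_{2n}(231)$ is the set of permutations $\pi$ of $[2n]$ that are alternating (up-down), i.e. $\pi(1)<\pi(2)>\pi(3)<\cdots>\pi(2n-1)<\pi(2n)$, and avoid the classical pattern $231$. *)

theory Defs
  imports Complex_Main "HOL-Combinatorics.Permutations"
begin

definition alternating :: "nat \<Rightarrow> (nat \<Rightarrow> nat) \<Rightarrow> bool" where
  "alternating m p \<longleftrightarrow>
     (\<forall>i. 1 \<le> i \<and> i < m \<longrightarrow>
        (if odd i then p i < p (Suc i) else p i > p (Suc i)))"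

definition avoids231 :: "nat \<Rightarrow> (nat \<Rightarrow> nat) \<Rightarrow> bool" where
  "avoids231 m p \<longleftrightarrow>
     \<not> (\<exists>i j k. 1 \<le> i \<and> i < j \<and> j < k \<and> k \<le> m \<and> p k < p i \<and> p i < p j)"

definition alt231 :: "nat \<Rightarrow> (nat \<Rightarrow> nat) set" where
  "alt231 n = {p. p permutes {1..2*n} \<and> alternating (2*n) p \<and> avoids231 (2*n) p}"

definition a_nk :: "nat \<Rightarrow> nat \<Rightarrow> nat" where
  "a_nk n k = card {p \<in> alt231 n. p (2*n) = n + k + 1}"

end

theory Submission imports Defs begin

lemma alt_cong:
  assumes "\<And>i j. 1\<le>i \<Longrightarrow> i\<le>m \<Longrightarrow> 1\<le>j \<Longrightarrow> j\<le>m \<Longrightarrow> (q i < q j \<longleftrightarrow> p i < p j)"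
  shows "alternating m q \<longleftrightarrow> alternating m p"
proof -
  have "\<forall>i. 1\<le>i \<and> i<m \<longrightarrow> (q i < q (Suc i) \<longleftrightarrow> p i < p (Suc i)) \<and> (q (Suc i) < q i \<longleftrightarrow> p (Suc i) < p i)"
    using assms by auto
  then show ?thesis unfolding alternating_def by auto
qed

lemma av_cong:
  assumes "\<And>i j. 1\<le>i \<Longrightarrow> i\<le>m \<Longrightarrow> 1\<le>j \<Longrightarrow> j\<le>m \<Longrightarrow> (q i < q j \<longleftrightarrow> p i < p j)"
  shows "avoids231 m q \<longleftrightarrow> avoids231 m p"
proof -
  have "(1 \<le> i \<and> i < j \<and> j < k \<and> k \<le> m \<and> q k < q i \<and> q i < q j) \<longleftrightarrow>
        (1 \<le> i \<and> i < j \<and> j < k \<and> k \<le> m \<and> p k < p i \<and> p i < p j)" for i j k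
  proof (cases "1 \<le> i \<and> i < j \<and> j < k \<and> k \<le> m")
    case True
    then show ?thesis using assms[of k i] assms[of i j] by auto
  qed auto
  then show ?thesis unfolding avoids231_def by blast
qed

lemma alt_mono: "alternating m p \<Longrightarrow> m' \<le> m \<Longrightarrow> alternating m' p"
  unfolding alternating_def by auto

lemma av_mono: "avoids231 m p \<Longrightarrow> m' \<le> m \<Longrightarrow> avoids231 m' p"
  unfolding avoids231_def by auto

lemma perm_facts:
  assumes "p permutes {1..m}"
  shows "\<And>i. 1 \<le> i \<Longrightarrow> i \<le> m \<Longrightarrow> 1 \<le> p i \<and> p i \<le> m"
    and "\<And>i j. p i = p j \<Longrightarrow> i = j"
    and "\<And>y. 1 \<le> y \<Longrightarrow> y \<le> m \<Longrightarrow> \<exists>i. 1 \<le> i \<and> i \<le> m \<and> p i = y"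
    and "\<And>i. \<not>(1 \<le> i \<and> i \<le> m) \<Longrightarrow> p i = i"
proof -
  show "\<And>i. 1 \<le> i \<Longrightarrow> i \<le> m \<Longrightarrow> 1 \<le> p i \<and> p i \<le> m"
    using permutes_in_image[OF assms] by auto
  show "\<And>i j. p i = p j \<Longrightarrow> i = j"
    using permutes_inj[OF assms] by (auto dest: injD)
  show "\<And>y. 1 \<le> y \<Longrightarrow> y \<le> m \<Longrightarrow> \<exists>i. 1 \<le> i \<and> i \<le> m \<and> p i = y"
  proof -
    fix y assume "1 \<le> y" "y \<le> m"
    then have "y \<in> p ` {1..m}" using permutes_image[OF assms] by auto
    then show "\<exists>i. 1 \<le> i \<and> i \<le> m \<and> p i = y" by auto
  qed
  show "\<And>i. \<not>(1 \<le> i \<and> i \<le> m) \<Longrightarrow> p i = i"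
    using permutes_not_in[OF assms] by auto
qed


lemma alt_at:
  assumes "alternating m p" "1 \<le> i" "i < m"
  shows "odd i \<Longrightarrow> p i < p (Suc i)" and "even i \<Longrightarrow> p (Suc i) < p i"
  using assms unfolding alternating_def by auto

lemma swap_fwd:
  assumes p: "p \<in> alt231 n" and pv: "p (2*n) = v" and pv1: "p (2*n-1) \<noteq> v-1"
    and n: "1 \<le> n" and v: "2 \<le> v" "v \<le> 2*n"
  shows "Transposition.transpose (v-1) v \<circ> p \<in> alt231 n \<and> (Transposition.transpose (v-1) v \<circ> p) (2*n) = v-1"
proof -
  from p have P: "p permutes {1..2*n}" "alternating (2*n) p" "avoids231 (2*n) p" by (auto simp: alt231_def)
  note F = perm_facts[OF P(1)]
  define \<tau> where "\<tau> = Transposition.transpose (v-1) v"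
  have tau: "\<tau> x = (if x = v-1 then v else if x = v then v-1 else x)" for x by (simp add: \<tau>_def transpose_def)
  have vpos: "\<And>i. p i = v \<Longrightarrow> i = 2*n" using F(2) pv by metis
  have s: "Suc (2*n-1) = 2*n" using n by auto
  have "p (2*n-1) < p (Suc (2*n-1))" using alt_at(1)[OF P(2), of "2*n-1"] n by auto
  then have last: "p (2*n-1) < v" using s pv by simp
  then have last2: "p (2*n-1) < v-1" using pv1 by auto
  have perm: "\<tau> \<circ> p permutes {1..2*n}" unfolding \<tau>_def
    by (rule permutes_compose[OF P(1) permutes_swap_id]) (use v in auto)
  have alt: "alternating (2*n) (\<tau> \<circ> p)"
    unfolding alternating_def
  proof (intro allI impI)
    fix i assume i: "1 \<le> i \<and> i < 2*n"
    have ne: "p i \<noteq> v" using vpos i by fastforce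
    have ne2: "p (Suc i) = v \<Longrightarrow> p i \<noteq> v-1"
    proof -
      assume "p (Suc i) = v"
      then have "Suc i = 2*n" using vpos by blast
      then have "i = 2*n-1" by auto
      then show ?thesis using pv1 by simp
    qed
    have ne3: "p i \<noteq> p (Suc i)" using F(2) by fastforce
    show "if odd i then (\<tau> \<circ> p) i < (\<tau> \<circ> p) (Suc i) else (\<tau> \<circ> p) (Suc i) < (\<tau> \<circ> p) i"
    proof (cases "odd i")
      case True
      then have "p i < p (Suc i)" using alt_at(1)[OF P(2)] i by auto
      then show ?thesis using True ne ne2 ne3 v by (auto simp: tau)
    next
      case False
      then have "p (Suc i) < p i" using alt_at(2)[OF P(2)] i by auto
      then show ?thesis using False ne ne2 ne3 v by (auto simp: tau)
    qed
  qed
  have av: "avoids231 (2*n) (\<tau> \<circ> p)"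
    unfolding avoids231_def
  proof
    assume "\<exists>i j k. 1 \<le> i \<and> i < j \<and> j < k \<and> k \<le> 2*n \<and> (\<tau> \<circ> p) k < (\<tau> \<circ> p) i \<and> (\<tau> \<circ> p) i < (\<tau> \<circ> p) j"
    then obtain i j k where ijk: "1 \<le> i" "i < j" "j < k" "k \<le> 2*n"
      and c1: "\<tau> (p k) < \<tau> (p i)" and c2: "\<tau> (p i) < \<tau> (p j)" by auto
    have noP: "\<not> (p k < p i \<and> p i < p j)" using P(3) ijk unfolding avoids231_def by blast
    have d: "p i \<noteq> p j" "p j \<noteq> p k" "p i \<noteq> p k" using F(2) ijk by (metis less_irrefl order.strict_trans)+
    have ni: "p i \<noteq> v" and nj: "p j \<noteq> v" using vpos ijk by fastforce+
    show False
    proof (cases "p k = v")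
      case False
      then show False using c1 c2 noP ni nj d by (auto simp: tau split: if_splits)
    next
      case True
      show False
      proof (cases "p i = v-1")
        case pi: True
        have "\<tau> (p j) = p j" using tau nj d pi by auto
        then have pj: "p j > v" using c2 pi tau by auto
        have "j \<noteq> 2*n-1" using pj last by auto
        then have j2: "j < 2*n-1" using ijk True vpos by fastforce
        have "1 \<le> i \<and> i < j \<and> j < 2*n-1 \<and> 2*n-1 \<le> 2*n \<and> p (2*n-1) < p i \<and> p i < p j"
          using ijk j2 last2 pi pj by auto
        then show False using P(3) unfolding avoids231_def by blast
      next
        case pi: False
        then show False using c1 c2 noP ni nj d True v by (auto simp: tau split: if_splits)
      qed
    qed
  qed
  have "(\<tau> \<circ> p) (2*n) = v-1" using pv tau by simp
  then show ?thesis using perm alt av by (simp add: alt231_def \<tau>_def)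
qed


lemma swap_bwd:
  assumes q: "q \<in> alt231 n" and qv: "q (2*n) = v-1"
    and n: "1 \<le> n" and v: "2 \<le> v" "v \<le> 2*n"
  shows "Transposition.transpose (v-1) v \<circ> q \<in> alt231 n \<and> (Transposition.transpose (v-1) v \<circ> q) (2*n) = v
     \<and> (Transposition.transpose (v-1) v \<circ> q) (2*n-1) \<noteq> v-1"
proof -
  from q have P: "q permutes {1..2*n}" "alternating (2*n) q" "avoids231 (2*n) q" by (auto simp: alt231_def)
  note F = perm_facts[OF P(1)]
  define \<tau> where "\<tau> = Transposition.transpose (v-1) v"
  have tau: "\<tau> x = (if x = v-1 then v else if x = v then v-1 else x)" for x by (simp add: \<tau>_def transpose_def)
  have vpos: "\<And>i. q i = v-1 \<Longrightarrow> i = 2*n" using F(2) qv by metis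
  have s: "Suc (2*n-1) = 2*n" using n by auto
  have "q (2*n-1) < q (Suc (2*n-1))" using alt_at(1)[OF P(2), of "2*n-1"] n by auto
  then have last: "q (2*n-1) < v-1" using s qv by simp
  have perm: "\<tau> \<circ> q permutes {1..2*n}" unfolding \<tau>_def
    by (rule permutes_compose[OF P(1) permutes_swap_id]) (use v in auto)
  have alt: "alternating (2*n) (\<tau> \<circ> q)"
    unfolding alternating_def
  proof (intro allI impI)
    fix i assume i: "1 \<le> i \<and> i < 2*n"
    have ne: "q i \<noteq> v-1" using vpos i by fastforce
    have ne2: "q (Suc i) = v-1 \<Longrightarrow> q i \<noteq> v"
    proof -
      assume "q (Suc i) = v-1"
      then have "Suc i = 2*n" using vpos by blast
      then have "i = 2*n-1" by auto
      then show ?thesis using last by simp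
    qed
    have ne3: "q i \<noteq> q (Suc i)" using F(2) by fastforce
    show "if odd i then (\<tau> \<circ> q) i < (\<tau> \<circ> q) (Suc i) else (\<tau> \<circ> q) (Suc i) < (\<tau> \<circ> q) i"
    proof (cases "odd i")
      case True
      then have "q i < q (Suc i)" using alt_at(1)[OF P(2)] i by auto
      then show ?thesis using True ne ne2 ne3 v by (auto simp: tau)
    next
      case False
      then have "q (Suc i) < q i" using alt_at(2)[OF P(2)] i by auto
      then show ?thesis using False ne ne2 ne3 v by (auto simp: tau)
    qed
  qed
  have av: "avoids231 (2*n) (\<tau> \<circ> q)"
    unfolding avoids231_def
  proof
    assume "\<exists>i j k. 1 \<le> i \<and> i < j \<and> j < k \<and> k \<le> 2*n \<and> (\<tau> \<circ> q) k < (\<tau> \<circ> q) i \<and> (\<tau> \<circ> q) i < (\<tau> \<circ> q) j"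
    then obtain i j k where ijk: "1 \<le> i" "i < j" "j < k" "k \<le> 2*n"
      and c1: "\<tau> (q k) < \<tau> (q i)" and c2: "\<tau> (q i) < \<tau> (q j)" by auto
    have noP: "\<not> (q k < q i \<and> q i < q j)" using P(3) ijk unfolding avoids231_def by blast
    have d: "q i \<noteq> q j" "q j \<noteq> q k" "q i \<noteq> q k" using F(2) ijk by (metis less_irrefl order.strict_trans)+
    have ni: "q i \<noteq> v-1" and nj: "q j \<noteq> v-1" using vpos ijk by fastforce+
    show False using c1 c2 noP ni nj d v by (auto simp: tau split: if_splits)
  qed
  have "(\<tau> \<circ> q) (2*n) = v" using qv tau v by simp
  moreover have "(\<tau> \<circ> q) (2*n-1) \<noteq> v-1" using last tau v by auto
  ultimately show ?thesis using perm alt av by (simp add: alt231_def \<tau>_def)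
qed


definition remf :: "nat \<Rightarrow> nat \<Rightarrow> (nat \<Rightarrow> nat) \<Rightarrow> nat \<Rightarrow> nat" where
  "remf v m p = (\<lambda>i. if 1 \<le> i \<and> i \<le> m then (if p i > v then p i - 2 else p i) else i)"

definition insf :: "nat \<Rightarrow> nat \<Rightarrow> (nat \<Rightarrow> nat) \<Rightarrow> nat \<Rightarrow> nat" where
  "insf v m s = (\<lambda>i. if 1 \<le> i \<and> i \<le> m then (if s i \<ge> v-1 then s i + 2 else s i)
     else if i = m+1 then v-1 else if i = m+2 then v else i)"

lemma perm_of_bij:
  fixes f :: "nat \<Rightarrow> nat"
  assumes "\<And>i. 1 \<le> i \<Longrightarrow> i \<le> m \<Longrightarrow> 1 \<le> f i \<and> f i \<le> m"
    and "\<And>i j. 1 \<le> i \<Longrightarrow> i \<le> m \<Longrightarrow> 1 \<le> j \<Longrightarrow> j \<le> m \<Longrightarrow> f i = f j \<Longrightarrow> i = j"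
    and "\<And>i. \<not> (1 \<le> i \<and> i \<le> m) \<Longrightarrow> f i = i"
  shows "f permutes {1..m}"
proof (rule bij_imp_permutes)
  have inj: "inj_on f {1..m}" using assms(2) by (auto intro: inj_onI)
  have sub: "f ` {1..m} \<subseteq> {1..m}" using assms(1) by auto
  have "f ` {1..m} = {1..m}" by (rule endo_inj_surj[OF finite_atLeastAtMost sub inj])
  then show "bij_betw f {1..m} {1..m}" using inj by (simp add: bij_betw_def)
  show "\<And>x. x \<notin> {1..m} \<Longrightarrow> f x = x" using assms(3) by auto
qed

lemma rem_fwd:
  assumes p: "p \<in> alt231 n" and pv: "p (2*n) = v" and pv1: "p (2*n-1) = v-1"
    and n: "2 \<le> n" and v: "2 \<le> v" "v \<le> 2*n"
  shows "remf v (2*(n-1)) p \<in> alt231 (n-1) \<and> remf v (2*(n-1)) p (2*(n-1)) = v-1"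
proof -
  define m where "m = 2*(n-1)"
  have m: "2*n = m+2" "2*n-1 = m+1" "2 \<le> m" using n by (auto simp: m_def)
  from p have P: "p permutes {1..m+2}" "alternating (m+2) p" "avoids231 (m+2) p" by (auto simp: alt231_def m)
  note F = perm_facts[OF P(1)]
  have pv': "p (m+2) = v" "p (m+1) = v-1" using pv pv1 m by auto
  define f where "f = remf v m p"
  have fi: "1 \<le> i \<Longrightarrow> i \<le> m \<Longrightarrow> f i = (if p i > v then p i - 2 else p i)" for i by (simp add: f_def remf_def)
  have pre: "1 \<le> i \<Longrightarrow> i \<le> m \<Longrightarrow> 1 \<le> p i \<and> p i \<le> m+2 \<and> p i \<noteq> v \<and> p i \<noteq> v-1" for i
    using F(1)[of i] F(2)[of i "m+2"] F(2)[of i "m+1"] pv' by force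
  have ord: "1 \<le> i \<Longrightarrow> i \<le> m \<Longrightarrow> 1 \<le> j \<Longrightarrow> j \<le> m \<Longrightarrow> (f i < f j \<longleftrightarrow> p i < p j)" for i j
    using pre[of i] pre[of j] fi[of i] fi[of j] v by auto
  have em: "even m" by (simp add: m_def)
  have "p m > p (Suc m)" using alt_at(2)[OF P(2), of m] m em by auto
  then have pm: "p m \<ge> v+1" using pre[of m] pv' m by auto
  then obtain i where i: "1 \<le> i" "i \<le> m+2" "p i = v+1" using F(3)[of "v+1"] pm F(1)[of m] m by force
  have "i = m"
  proof (rule ccontr)
    assume "i \<noteq> m"
    moreover have "i \<noteq> m+1" "i \<noteq> m+2" using i pv' v by auto
    ultimately have "i < m" using i by auto
    moreover have "p m \<noteq> v+1" using F(2) i \<open>i \<noteq> m\<close> by metis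
    ultimately have "1 \<le> i \<and> i < m \<and> m < m+1 \<and> m+1 \<le> m+2 \<and> p (m+1) < p i \<and> p i < p m"
      using i pv' pm by auto
    then show False using P(3) unfolding avoids231_def by blast
  qed
  then have fm: "f m = v-1" using fi[of m] i m by auto
  have perm: "f permutes {1..m}"
  proof (rule perm_of_bij)
    show "1 \<le> i \<Longrightarrow> i \<le> m \<Longrightarrow> 1 \<le> f i \<and> f i \<le> m" for i using pre[of i] fi[of i] v m by auto
    show "1 \<le> i \<Longrightarrow> i \<le> m \<Longrightarrow> 1 \<le> j \<Longrightarrow> j \<le> m \<Longrightarrow> f i = f j \<Longrightarrow> i = j" for i j
    proof -
      assume ij: "1 \<le> i" "i \<le> m" "1 \<le> j" "j \<le> m" "f i = f j"
      then have "p i = p j" using ord[of i j] ord[of j i] by auto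
      then show "i = j" using F(2) by blast
    qed
    show "\<not> (1 \<le> i \<and> i \<le> m) \<Longrightarrow> f i = i" for i unfolding f_def remf_def by auto
  qed
  have "alternating m p" using alt_mono[OF P(2)] by auto
  then have alt: "alternating m f" using alt_cong[of m f p] ord by blast
  have "avoids231 m p" using av_mono[OF P(3)] by auto
  then have av: "avoids231 m f" using av_cong[of m f p] ord by blast
  show ?thesis using perm alt av fm by (simp add: alt231_def f_def m_def)
qed

lemma ins_fwd:
  assumes s: "s \<in> alt231 (n-1)" and sv: "s (2*(n-1)) = v-1"
    and n: "2 \<le> n" and v: "2 \<le> v" "v \<le> 2*n"
  shows "insf v (2*(n-1)) s \<in> alt231 n \<and> insf v (2*(n-1)) s (2*n) = v \<and> insf v (2*(n-1)) s (2*n-1) = v-1"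
proof -
  define m where "m = 2*(n-1)"
  have m: "2*n = m+2" "2*n-1 = m+1" "2 \<le> m" using n by (auto simp: m_def)
  from s have P: "s permutes {1..m}" "alternating m s" "avoids231 m s" by (auto simp: alt231_def m_def)
  note F = perm_facts[OF P(1)]
  have sv': "s m = v-1" using sv by (simp add: m_def)
  have vm: "v-1 \<le> m" using F(1)[of m] sv' m by auto
  define g where "g = insf v m s"
  have gi: "1 \<le> i \<Longrightarrow> i \<le> m \<Longrightarrow> g i = (if s i \<ge> v-1 then s i + 2 else s i)" for i by (simp add: g_def insf_def)
  have g1: "g (m+1) = v-1" "g (m+2) = v" by (simp_all add: g_def insf_def)
  have ord: "1 \<le> i \<Longrightarrow> i \<le> m \<Longrightarrow> 1 \<le> j \<Longrightarrow> j \<le> m \<Longrightarrow> (g i < g j \<longleftrightarrow> s i < s j)" for i j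
    using gi[of i] gi[of j] by auto
  have perm: "g permutes {1..m+2}"
  proof (rule perm_of_bij)
    show "1 \<le> i \<Longrightarrow> i \<le> m+2 \<Longrightarrow> 1 \<le> g i \<and> g i \<le> m+2" for i
    proof -
      assume i: "1 \<le> i" "i \<le> m+2"
      show ?thesis
      proof (cases "i \<le> m")
        case True then show ?thesis using gi[of i] F(1)[of i] i by auto
      next
        case False then have "i = m+1 \<or> i = m+2" using i by auto
        then show ?thesis using g1 v vm by auto
      qed
    qed
    show "1 \<le> i \<Longrightarrow> i \<le> m+2 \<Longrightarrow> 1 \<le> j \<Longrightarrow> j \<le> m+2 \<Longrightarrow> g i = g j \<Longrightarrow> i = j" for i j
    proof -
      assume ij: "1 \<le> i" "i \<le> m+2" "1 \<le> j" "j \<le> m+2" "g i = g j"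
      have gp: "1 \<le> k \<Longrightarrow> k \<le> m \<Longrightarrow> g k \<noteq> v \<and> g k \<noteq> v-1" for k using gi[of k] by auto
      show "i = j"
      proof (cases "i \<le> m \<and> j \<le> m")
        case True
        then have "s i = s j" using ord[of i j] ord[of j i] ij by auto
        then show ?thesis using F(2) by blast
      next
        case False
        have ci: "i \<le> m \<or> i = m+1 \<or> i = m+2" and cj: "j \<le> m \<or> j = m+1 \<or> j = m+2" using ij by auto
        show ?thesis using ci cj False ij g1 gp[of i] gp[of j] v by auto
      qed
    qed
    show "\<not> (1 \<le> i \<and> i \<le> m+2) \<Longrightarrow> g i = i" for i by (auto simp: g_def insf_def)
  qed
  have altm: "alternating m g" using alt_cong[of m g s] ord P(2) by blast
  have alt: "alternating (m+2) g"
    unfolding alternating_def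
  proof (intro allI impI)
    fix i assume i: "1 \<le> i \<and> i < m+2"
    show "if odd i then g i < g (Suc i) else g (Suc i) < g i"
    proof (cases "i < m")
      case True then show ?thesis using altm i unfolding alternating_def by auto
    next
      case False
      then have "i = m \<or> i = m+1" using i by auto
      then show ?thesis
      proof
        assume im: "i = m"
        have "even m" by (simp add: m_def)
        moreover have "g m = v+1" using gi[of m] sv' m v by auto
        ultimately show ?thesis using im g1 v by auto
      next
        assume im: "i = m+1"
        have "odd (m+1)" by (simp add: m_def)
        then show ?thesis using im g1 v by (auto simp: numeral_2_eq_2)
      qed
    qed
  qed
  have avm: "avoids231 m g" using av_cong[of m g s] ord P(3) by blast
  have av: "avoids231 (m+2) g"
    unfolding avoids231_def
  proof
    assume "\<exists>i j k. 1 \<le> i \<and> i < j \<and> j < k \<and> k \<le> m+2 \<and> g k < g i \<and> g i < g j"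
    then obtain i j k where ijk: "1 \<le> i" "i < j" "j < k" "k \<le> m+2"
      and c1: "g k < g i" and c2: "g i < g j" by auto
    show False
    proof (cases "k \<le> m")
      case True then show False using avm ijk c1 c2 unfolding avoids231_def by blast
    next
      case False
      then have k: "k = m+1 \<or> k = m+2" using ijk by auto
      then have gk: "g k \<ge> v-1" using g1 by auto
      show False
      proof (cases "j \<le> m")
        case False
        then have "j = m+1" "k = m+2" using ijk k by auto
        then show False using c1 c2 g1 by auto
      next
        case True
        have si: "s i \<ge> v-1" using gi[of i] ijk True c1 gk by (auto split: if_splits)
        have sij: "s i < s j" using ord[of i j] c2 ijk True by auto
        have "j \<noteq> m" using si sij sv' by auto
        then have jm: "j < m" using True by auto
        have "s i \<noteq> v-1" using F(2)[of i m] sv' ijk jm by auto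
        then have "1 \<le> i \<and> i < j \<and> j < m \<and> m \<le> m \<and> s m < s i \<and> s i < s j"
          using si sij sv' ijk jm by auto
        then show False using P(3) unfolding avoids231_def by blast
      qed
    qed
  qed
  show ?thesis using perm alt av g1 m by (simp add: alt231_def g_def m_def)
qed


lemma rem_ins:
  assumes p: "p \<in> alt231 n" and pv: "p (2*n) = v" and pv1: "p (2*n-1) = v-1"
    and n: "2 \<le> n" and v: "2 \<le> v" "v \<le> 2*n"
  shows "insf v (2*(n-1)) (remf v (2*(n-1)) p) = p"
proof
  fix i
  define m where "m = 2*(n-1)"
  have m: "2*n = m+2" "2*n-1 = m+1" "2 \<le> m" using n by (auto simp: m_def)
  from p have P: "p permutes {1..m+2}" by (auto simp: alt231_def m)
  note F = perm_facts[OF P(1)]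
  have pv': "p (m+2) = v" "p (m+1) = v-1" using pv pv1 m by auto
  have pre: "1 \<le> i \<Longrightarrow> i \<le> m \<Longrightarrow> 1 \<le> p i \<and> p i \<le> m+2 \<and> p i \<noteq> v \<and> p i \<noteq> v-1"
    using F(1)[of i] F(2)[of i "m+2"] F(2)[of i "m+1"] pv' by force
  have out: "\<not> (1 \<le> i \<and> i \<le> m+2) \<Longrightarrow> p i = i" using F(4) by blast
  show "insf v (2*(n-1)) (remf v (2*(n-1)) p) i = p i"
    unfolding m_def[symmetric] insf_def remf_def
    using pre out pv' v by auto
qed

lemma ins_rem:
  assumes s: "s \<in> alt231 (n-1)" and n: "2 \<le> n" and v: "2 \<le> v"
  shows "remf v (2*(n-1)) (insf v (2*(n-1)) s) = s"
proof
  fix i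
  define m where "m = 2*(n-1)"
  from s have P: "s permutes {1..m}" by (auto simp: alt231_def m_def)
  note F = perm_facts[OF P(1)]
  have out: "\<not> (1 \<le> i \<and> i \<le> m) \<Longrightarrow> s i = i" using F(4) by blast
  show "remf v (2*(n-1)) (insf v (2*(n-1)) s) i = s i"
    unfolding m_def[symmetric] insf_def remf_def
    using out v by auto
qed

definition E :: "nat \<Rightarrow> nat \<Rightarrow> nat" where
  "E n v = card {p \<in> alt231 n. p (2*n) = v}"

lemma fin_alt: "finite (alt231 n)"
proof -
  have "alt231 n \<subseteq> {p. p permutes {1..2*n}}" by (auto simp: alt231_def)
  then show ?thesis using finite_permutations[of "{1..2*n}"] finite_subset by auto
qed

lemma E_rec:
  assumes n: "2 \<le> n" and v: "2 \<le> v" "v \<le> 2*n"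
  shows "E n v = E n (v-1) + E (n-1) (v-1)"
proof -
  define A where "A = {p \<in> alt231 n. p (2*n) = v}"
  define G where "G = {p \<in> alt231 n. p (2*n) = v \<and> p (2*n-1) \<noteq> v-1}"
  define B where "B = {p \<in> alt231 n. p (2*n) = v \<and> p (2*n-1) = v-1}"
  define A' where "A' = {p \<in> alt231 n. p (2*n) = v-1}"
  define C where "C = {p \<in> alt231 (n-1). p (2*(n-1)) = v-1}"
  have fG: "finite G" and fB: "finite B" using fin_alt[of n] by (auto simp: G_def B_def)
  have "A = G \<union> B" "G \<inter> B = {}" by (auto simp: A_def G_def B_def)
  then have cA: "card A = card G + card B" using card_Un_disjoint[OF fG fB] by simp
  define t where "t = (\<lambda>p::nat\<Rightarrow>nat. Transposition.transpose (v-1) v \<circ> p)"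
  have tt: "t (t p) = p" for p by (auto simp: t_def fun_eq_iff)
  have "bij_betw t G A'"
  proof (rule bij_betw_byWitness[where f'=t])
    show "\<forall>a\<in>G. t (t a) = a" using tt by blast
    show "\<forall>a\<in>A'. t (t a) = a" using tt by blast
    show "t ` G \<subseteq> A'" using swap_fwd[of _ n v] n v by (auto simp: G_def A'_def t_def)
    show "t ` A' \<subseteq> G" using swap_bwd[of _ n v] n v by (auto simp: G_def A'_def t_def)
  qed
  then have cG: "card G = card A'" by (rule bij_betw_same_card)
  have "bij_betw (remf v (2*(n-1))) B C"
  proof (rule bij_betw_byWitness[where f'="insf v (2*(n-1))"])
    show "\<forall>a\<in>B. insf v (2*(n-1)) (remf v (2*(n-1)) a) = a"
      using rem_ins[of _ n v] n v by (auto simp: B_def)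
    show "\<forall>a\<in>C. remf v (2*(n-1)) (insf v (2*(n-1)) a) = a"
      using ins_rem[of _ n v] n v by (auto simp: C_def)
    show "remf v (2*(n-1)) ` B \<subseteq> C" using rem_fwd[of _ n v] n v by (auto simp: B_def C_def)
    show "insf v (2*(n-1)) ` C \<subseteq> B" using ins_fwd[of _ n v] n v by (auto simp: B_def C_def)
  qed
  then have cB: "card B = card C" by (rule bij_betw_same_card)
  show ?thesis using cA cG cB by (simp add: E_def A_def A'_def C_def)
qed


lemma E_one: assumes "1 \<le> n" shows "E n 1 = 0"
proof -
  have "{p \<in> alt231 n. p (2*n) = 1} = {}"
  proof (rule ccontr)
    assume "{p \<in> alt231 n. p (2*n) = 1} \<noteq> {}"
    then obtain p where p: "p \<in> alt231 n" "p (2*n) = 1" by auto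
    then have P: "p permutes {1..2*n}" "alternating (2*n) p" by (auto simp: alt231_def)
    have s: "Suc (2*n-1) = 2*n" using assms by auto
    have "p (2*n-1) < p (Suc (2*n-1))" using alt_at(1)[OF P(2), of "2*n-1"] assms by auto
    moreover have "1 \<le> p (2*n-1)" using perm_facts(1)[OF P(1), of "2*n-1"] assms by auto
    ultimately show False using s p(2) by simp
  qed
  then show ?thesis unfolding E_def by (simp only: card.empty)
qed

lemma E_big: assumes "1 \<le> n" "2*n < v" shows "E n v = 0"
proof -
  have "{p \<in> alt231 n. p (2*n) = v} = {}"
  proof (rule ccontr)
    assume "{p \<in> alt231 n. p (2*n) = v} \<noteq> {}"
    then obtain p where p: "p \<in> alt231 n" "p (2*n) = v" by auto
    then have P: "p permutes {1..2*n}" by (auto simp: alt231_def)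
    have "p (2*n) \<le> 2*n" using perm_facts(1)[OF P(1), of "2*n"] assms by auto
    then show False using p assms by simp
  qed
  then show ?thesis unfolding E_def by (simp only: card.empty)
qed

lemma E_12: "E 1 2 = 1"
proof -
  have "{p \<in> alt231 1. p (2*1) = 2} = {id}"
  proof
    show "{id} \<subseteq> {p \<in> alt231 1. p (2*1) = 2}"
      by (auto simp: alt231_def alternating_def avoids231_def)
    show "{p \<in> alt231 1. p (2*1) = 2} \<subseteq> {id}"
    proof
      fix p assume "p \<in> {p \<in> alt231 1. p (2*1) = 2}"
      then have P: "p permutes {1..2}" and p2: "p 2 = 2" by (auto simp: alt231_def)
      note F = perm_facts[OF P]
      have "p 1 \<noteq> 2" using F(2)[of 1 2] p2 by auto
      then have "p 1 = 1" using F(1)[of 1] by auto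
      then have "p x = x" for x using p2 F(4)[of x] by (cases "x = 1 \<or> x = 2") auto
      then show "p \<in> {id}" by auto
    qed
  qed
  then show ?thesis by (simp add: E_def)
qed

definition cb :: "nat \<Rightarrow> int \<Rightarrow> int" where
  "cb m j = (if j < 0 then 0 else int (m choose nat j))"

definition gf :: "nat \<Rightarrow> nat \<Rightarrow> int" where
  "gf n v = cb (v-2) (int v - int n - 1) - cb (v-2) (int v - int n - 2)"

lemma cb_pascal: "cb (Suc m) j = cb m j + cb m (j-1)"
proof (cases "j \<le> 0")
  case True then show ?thesis by (cases "j = 0") (auto simp: cb_def)
next
  case False
  then have "nat j = Suc (nat (j-1))" by auto
  then show ?thesis using False by (simp add: cb_def)
qed

lemma gf_rec: assumes "2 \<le> n" "2 \<le> v" shows "gf n v = gf n (v-1) + gf (n-1) (v-1)"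
proof (cases "v = 2")
  case True
  then show ?thesis using assms by (simp add: gf_def cb_def)
next
  case False
  then have v3: "3 \<le> v" using assms by auto
  define m where "m = v - 3"
  have vm: "v - 2 = Suc m" "v - 1 - 2 = m" "int (v-1) = int v - 1" "int (n-1) = int n - 1"
    using v3 assms by (auto simp: m_def)
  show ?thesis unfolding gf_def vm cb_pascal
    by (simp add: algebra_simps)
qed


lemma gf_top: assumes "1 \<le> n" shows "gf n (2*n+1) = 0"
proof -
  have a: "int (2*n+1) - int n - 1 = int n" "int (2*n+1) - int n - 2 = int (n-1)" "2*n+1-2 = 2*n-1"
    using assms by auto
  have "(2*n-1) choose (n-1) = (2*n-1) choose (2*n-1-(n-1))"
    by (rule binomial_symmetric) (use assms in auto)
  moreover have "2*n-1-(n-1) = n" using assms by auto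
  ultimately show ?thesis unfolding gf_def a cb_def by simp
qed

lemma E_gf: assumes "1 \<le> n" shows "\<forall>v. 1 \<le> v \<and> v \<le> 2*n \<longrightarrow> int (E n v) = gf n v"
  using assms
proof (induction n rule: nat_induct_at_least)
  case base
  show ?case
  proof (intro allI impI)
    fix v :: nat assume v: "1 \<le> v \<and> v \<le> 2*1"
    then have "v = 1 \<or> v = 2" by auto
    then show "int (E 1 v) = gf 1 v"
      using E_one[of 1] E_12 by (auto simp: gf_def cb_def)
  qed
next
  case (Suc n)
  note outer = Suc.IH
  have "1 \<le> v \<longrightarrow> v \<le> 2*Suc n \<longrightarrow> int (E (Suc n) v) = gf (Suc n) v" for v
  proof (induction v)
    case 0 then show ?case by simp
  next
    case (Suc w)
    show ?case
    proof (cases "w = 0")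
      case True
      then show ?thesis using E_one[of "Suc n"] by (auto simp: gf_def cb_def)
    next
      case False
      show ?thesis
      proof (intro impI)
        assume w: "1 \<le> Suc w" "Suc w \<le> 2 * Suc n"
        have r: "E (Suc n) (Suc w) = E (Suc n) w + E n w"
          using E_rec[of "Suc n" "Suc w"] Suc.hyps w False by auto
        have i1: "int (E (Suc n) w) = gf (Suc n) w" using Suc.IH w False by auto
        have i2: "int (E n w) = gf n w"
        proof (cases "w \<le> 2*n")
          case True then show ?thesis using outer False by auto
        next
          case F: False
          then have "w = 2*n+1" using w by auto
          then show ?thesis using E_big[of n w] gf_top[of n] Suc.hyps by auto
        qed
        have "gf (Suc n) (Suc w) = gf (Suc n) w + gf n w"
          using gf_rec[of "Suc n" "Suc w"] Suc.hyps False by auto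
        then show "int (E (Suc n) (Suc w)) = gf (Suc n) (Suc w)" using r i1 i2 by simp
      qed
    qed
  qed
  then show ?case by blast
qed


theorem proposition5p8:
  fixes n k :: nat
  assumes "1 \<le> n" and "k \<le> n - 1"
  shows "real (a_nk n k) = (real (n - k) / real n) * real ((n - 1 + k) choose k)"
proof -
  have aE: "a_nk n k = E n (n+k+1)" by (simp add: a_nk_def E_def)
  have "int (E n (n+k+1)) = gf n (n+k+1)" using E_gf[OF assms(1)] assms by auto
  moreover have e: "n+k+1-2 = n-1+k" "int (n+k+1) - int n - 1 = int k" "int (n+k+1) - int n - 2 = int k - 1"
    using assms by auto
  ultimately have h: "int (a_nk n k) = cb (n-1+k) (int k) - cb (n-1+k) (int k - 1)"
    using aE by (simp add: gf_def)
  have npos: "real n > 0" using assms by auto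
  show ?thesis
  proof (cases "k = 0")
    case True
    then have "a_nk n k = 1" using h by (simp add: cb_def)
    then show ?thesis using True npos by simp
  next
    case False
    have nk: "nat (int k - 1) = k - 1" by auto
    have h2: "int (a_nk n k) = int ((n-1+k) choose k) - int ((n-1+k) choose (k-1))"
      using h False by (simp add: cb_def nk)
    have b: "Suc (k-1) * (Suc (k-1 + (n-1)) choose Suc (k-1)) = Suc (n-1) * (Suc (k-1 + (n-1)) choose (k-1))"
      by (rule Suc_times_binomial_add)
    have e2: "Suc (k-1) = k" "Suc (n-1) = n" "Suc (k-1 + (n-1)) = n-1+k" using False assms by auto
    have b2: "real k * real ((n-1+k) choose k) = real n * real ((n-1+k) choose (k-1))"
      using b unfolding e2 by (metis of_nat_mult)
    have "real (a_nk n k) = real ((n-1+k) choose k) - real ((n-1+k) choose (k-1))"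
      using h2 by (metis of_int_of_nat_eq of_int_diff)
    also have "\<dots> = real ((n-1+k) choose k) - real k * real ((n-1+k) choose k) / real n"
      using b2 npos by (simp add: field_simps)
    also have "\<dots> = (real (n - k) / real n) * real ((n - 1 + k) choose k)"
      using npos assms by (simp add: field_simps of_nat_diff)
    finally show ?thesis .
  qed
qed

end
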